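(* Let $X$ be a proper metric space, $W\subset X$ a closed subset, $g:W\to\mathbb R$ a function, and $f_n:X\to\mathbb R_+$ ($n=1,2,\dots$) coarsely proper functions with $f_n|_W\ge g$ for all $n$. Then there exist bounded subsets $A_n\subset X$ and a coarsely proper function $f:X\to\mathbb R_+$ such that $f|_W\ge g$, and for every $n$: $f(x)\le n$ for $x\in A_n$ and $f(x)\le f_n(x)$ for $x\in X\setminus A_n$.
   Context: $\mathbb R_+=[0,\infty)$. A function is coarsely proper if preimages of bounded sets are bounded (functions need not be continuous). *)

theory Defs
  imports "HOL-Analysis.Analysis"
begin

definition coarsely_proper :: "('a::metric_space \<Rightarrow> real) \<Rightarrow> bool" where
  "coarsely_proper f \<longleftrightarrow> (\<forall>B. bounded B \<longrightarrow> bounded (f -` B))"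

end

theory Submission
  imports Defs
begin

theorem proposition7p5:
  fixes W :: "'a::metric_space set"
    and g :: "'a \<Rightarrow> real"
    and F :: "nat \<Rightarrow> 'a \<Rightarrow> real"
  assumes proper: "\<forall>(x::'a) (e::real). compact (cball x e)"
    and W_closed: "closed W"
    and F_nonneg: "\<forall>n\<ge>1. \<forall>x. F n x \<ge> 0"
    and F_cp: "\<forall>n\<ge>1. coarsely_proper (F n)"
    and F_W: "\<forall>n\<ge>1. \<forall>x\<in>W. F n x \<ge> g x"
  shows "\<exists>(A :: nat \<Rightarrow> 'a set) (f :: 'a \<Rightarrow> real).
           (\<forall>n\<ge>1. bounded (A n)) \<and>
           (\<forall>x. f x \<ge> 0) \<and> coarsely_proper f \<and>
           (\<forall>x\<in>W. f x \<ge> g x) \<and>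
           (\<forall>n\<ge>1. (\<forall>x\<in>A n. f x \<le> real n) \<and> (\<forall>x. x \<notin> A n \<longrightarrow> f x \<le> F n x))"
proof -
  define A where "A n = F n -` {0..real n}" for n
  define f where "f x = (INF n\<in>{1::nat..}. max (real n) (F n x))" for x
  have bdd: "bdd_below ((\<lambda>n. max (real n) (F n x)) ` {1..})" for x
    by (rule bdd_belowI[where m=0]) auto
  have low: "f x \<le> max (real n) (F n x)" if "n \<ge> 1" for x n
    unfolding f_def by (rule cINF_lower[OF bdd]) (use that in auto)
  have ge: "f x \<ge> c" if "\<And>n. n \<ge> 1 \<Longrightarrow> c \<le> max (real n) (F n x)" for x c
    unfolding f_def by (rule cINF_greatest) (use that in auto)
  have bA: "\<forall>n\<ge>1. bounded (A n)"
    using F_cp unfolding coarsely_proper_def A_def by auto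
  have f0: "\<forall>x. f x \<ge> 0"
    by (intro allI ge) auto
  have fW: "\<forall>x\<in>W. f x \<ge> g x"
    using F_W by (intro ballI ge) (auto intro: le_max_iff_disj[THEN iffD2])
  have cp: "coarsely_proper f"
    unfolding coarsely_proper_def
  proof (intro allI impI)
    fix B :: "real set" assume "bounded B"
    then obtain R where R: "\<forall>y\<in>B. \<bar>y\<bar> \<le> R" using bounded_real by blast
    define N where "N = nat \<lceil>R + 1\<rceil>"
    have sub: "f -` B \<subseteq> (\<Union>n\<in>{1..N}. F n -` {0..R+1})"
    proof
      fix x assume "x \<in> f -` B"
      then have "f x < R + 1" using R by force
      then obtain n where n: "n \<in> {1::nat..}" "max (real n) (F n x) < R + 1"
        using cINF_less_iff[OF _ bdd, of x "R+1"] unfolding f_def by auto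
      have "n \<le> N" using n unfolding N_def by linarith
      then show "x \<in> (\<Union>n\<in>{1..N}. F n -` {0..R+1})"
        using n F_nonneg by (intro UN_I[of n]) auto
    qed
    have "bounded (\<Union>n\<in>{1..N}. F n -` {0..R+1})"
      using F_cp unfolding coarsely_proper_def by (intro bounded_UN) auto
    then show "bounded (f -` B)" using sub bounded_subset by blast
  qed
  have last: "\<forall>n\<ge>1. (\<forall>x\<in>A n. f x \<le> real n) \<and> (\<forall>x. x \<notin> A n \<longrightarrow> f x \<le> F n x)"
  proof (intro allI impI conjI ballI)
    fix n :: nat and x assume n: "n \<ge> 1"
    { assume "x \<in> A n" then show "f x \<le> real n"
        using low[OF n, of x] unfolding A_def by auto }
    { assume "x \<notin> A n" then show "f x \<le> F n x"
        using low[OF n, of x] F_nonneg n unfolding A_def by auto }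
  qed
  show ?thesis using bA f0 cp fW last by blast
qed

end
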